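(* Let $I$ be a compact interval, $J\subseteq I$ a nonempty open interval, $S\subseteq\mathrm{Homeo}_+(I)$ a finite set, $\tau\in(0,1)$, and $(s_n)_{n\ge1}$ an infinite sequence in $S$ such that $\sum_{n\ge0}|s_n\cdots s_1J|^\tau<\infty$ (the $n=0$ term being $|J|^\tau$). If $c\in\mathrm{Homeo}_+(I)$ commutes with every element of $S$ and acts nontrivially on $J$ (i.e. $c(J)=J$ and $c|_J\neq\mathrm{id}$), then $S\cup\{c\}$ is a $(2,\tau)$-nesting. In particular, $S\cup\{c\}\not\subseteq\mathrm{Diff}_+^{1,\tau}(I)$.
   Context: $|\cdot|$ denotes length. $\mathrm{Diff}_+^{1,\tau}(I)$ is the group of orientation-preserving $C^1$-diffeomorphisms of $I$ with $\tau$-Hölder continuous derivative. For an integer $k\ge2$ and $u\in(0,1]$, a finite set $S\subseteq\mathrm{Homeo}_+(I)$ is a $(k,u)$-nesting if there exist nonempty open intervals $J_1\supsetneq\cdots\supsetneq J_k$ and an infinite sequence $(s_1,s_2,\ldots)$ in $S$ such that, with $w_n=s_n\cdots s_1$ ($w_0=\mathrm{id}$): (i) $\sum_{n\ge0}|w_nJ_1|^u<\infty$; (ii) for each $i=2,\ldots,k$ and $n\ge0$ some $s\in S$ satisfies $sw_nJ_i\cap w_nJ_i=\varnothing$ and $sw_nJ_{i-1}=w_nJ_{i-1}$. *)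

theory Defs
  imports "HOL-Analysis.Analysis"
begin

text \<open>Orientation-preserving homeomorphisms of a compact interval I, as functions
  real => real considered on I only.\<close>
definition homeo_plus :: "real set \<Rightarrow> (real \<Rightarrow> real) \<Rightarrow> bool" where
  "homeo_plus I f \<longleftrightarrow> continuous_on I f \<and> strict_mono_on I f \<and> bij_betw f I I"

definition open_interval :: "real set \<Rightarrow> bool" where
  "open_interval J \<longleftrightarrow> (\<exists>x y. x < y \<and> J = {x<..<y})"

definition len :: "real set \<Rightarrow> real" where
  "len A = Sup A - Inf A"

primrec word :: "(nat \<Rightarrow> real \<Rightarrow> real) \<Rightarrow> nat \<Rightarrow> real \<Rightarrow> real" where
  "word s 0 = id"
| "word s (Suc n) = s (Suc n) \<circ> word s n"

definition nesting :: "real set \<Rightarrow> nat \<Rightarrow> real \<Rightarrow> (real \<Rightarrow> real) set \<Rightarrow> bool" where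
  "nesting I k u S \<longleftrightarrow>
     finite S \<and> (\<forall>f\<in>S. homeo_plus I f) \<and> 2 \<le> k \<and> 0 < u \<and> u \<le> 1 \<and>
     (\<exists>J :: nat \<Rightarrow> real set.
        (\<forall>i\<in>{1..k}. open_interval (J i) \<and> J i \<subseteq> I) \<and>
        (\<forall>i\<in>{2..k}. J i \<subset> J (i - 1)) \<and>
        (\<exists>s :: nat \<Rightarrow> real \<Rightarrow> real.
           (\<forall>n\<ge>1. s n \<in> S) \<and>
           summable (\<lambda>n. len (word s n ` J 1) powr u) \<and>
           (\<forall>i\<in>{2..k}. \<forall>n. \<exists>t\<in>S.
               t ` (word s n ` J i) \<inter> word s n ` J i = {} \<and>
               t ` (word s n ` J (i - 1)) = word s n ` J (i - 1))))"

definition C1_on :: "real set \<Rightarrow> (real \<Rightarrow> real) \<Rightarrow> bool" where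
  "C1_on I f \<longleftrightarrow> (\<exists>f'. (\<forall>x\<in>I. (f has_real_derivative f' x) (at x within I)) \<and> continuous_on I f')"

definition diff_plus_1tau :: "real set \<Rightarrow> real \<Rightarrow> (real \<Rightarrow> real) \<Rightarrow> bool" where
  "diff_plus_1tau I \<tau> f \<longleftrightarrow> homeo_plus I f \<and> C1_on I (inv_into I f) \<and>
     (\<exists>f' C. (\<forall>x\<in>I. (f has_real_derivative f' x) (at x within I)) \<and>
        (\<forall>x\<in>I. \<forall>y\<in>I. \<bar>f' x - f' y\<bar> \<le> C * \<bar>x - y\<bar> powr \<tau>))"

end

theory Submission
  imports Defs
begin

lemma mvt_within:
  fixes f F :: "real \<Rightarrow> real"
  assumes "a \<le> u" "u < v" "v \<le> b"
    and "\<forall>x\<in>{a..b}. (f has_real_derivative F x) (at x within {a..b})"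
  shows "\<exists>\<xi>. u < \<xi> \<and> \<xi> < v \<and> f v - f u = F \<xi> * (v - u)"
proof -
  have "\<exists>x\<in>{u<..<v}. f v - f u = (\<lambda>h. F x * h) (v - u)"
  proof (rule mvt_simple[OF assms(2)])
    fix x assume "u \<le> x" "x \<le> v"
    then have "(f has_real_derivative F x) (at x within {a..b})" using assms by auto
    then have "(f has_real_derivative F x) (at x within {u..v})"
      by (rule DERIV_subset) (use assms in auto)
    then show "(f has_derivative (\<lambda>h. F x * h)) (at x within {u..v})"
      by (simp add: has_field_derivative_def)
  qed
  then show ?thesis by auto
qed

lemma holder_cont:
  fixes D :: "real \<Rightarrow> real"
  assumes "\<forall>x\<in>I. \<forall>y\<in>I. \<bar>D x - D y\<bar> \<le> C * \<bar>x - y\<bar> powr \<tau>" "0 < \<tau>"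
  shows "continuous_on I D"
  unfolding continuous_on_def
proof
  fix x assume x: "x \<in> I"
  have "((\<lambda>y. D y - D x) \<longlongrightarrow> 0) (at x within I)"
  proof (rule Lim_null_comparison)
    show "\<forall>\<^sub>F y in at x within I. norm (D y - D x) \<le> \<bar>C\<bar> * \<bar>y - x\<bar> powr \<tau>"
      unfolding eventually_at_filter
    proof (intro always_eventually allI impI)
      fix y assume "y \<in> I"
      then have "\<bar>D y - D x\<bar> \<le> C * \<bar>y - x\<bar> powr \<tau>" using assms x by auto
      also have "\<dots> \<le> \<bar>C\<bar> * \<bar>y - x\<bar> powr \<tau>" by (intro mult_right_mono) auto
      finally show "norm (D y - D x) \<le> \<bar>C\<bar> * \<bar>y - x\<bar> powr \<tau>" by simp
    qed
    have "((\<lambda>y. y) \<longlongrightarrow> x) (at x within I)" by (rule tendsto_ident_at)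
    then have "((\<lambda>y. y - x) \<longlongrightarrow> 0) (at x within I)" by (rule LIM_zero)
    then have "((\<lambda>y. \<bar>y - x\<bar>) \<longlongrightarrow> 0) (at x within I)" by (rule tendsto_rabs_zero)
    then have "((\<lambda>y. \<bar>y - x\<bar> powr \<tau>) \<longlongrightarrow> 0) (at x within I)"
      by (rule tendsto_zero_powrI[OF _ tendsto_const]) (auto simp: assms(2))
    then show "((\<lambda>y. \<bar>C\<bar> * \<bar>y - x\<bar> powr \<tau>) \<longlongrightarrow> 0) (at x within I)"
      by (rule tendsto_mult_right_zero)
  qed
  then show "(D \<longlongrightarrow> D x) (at x within I)" by (rule LIM_zero_cancel)
qed

lemma not_bot_Icc:
  fixes a b x :: real
  assumes "a < b" "x \<in> {a..b}"
  shows "at x within {a..b} \<noteq> bot"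
  using assms by (auto simp: trivial_limit_within islimpt_Icc)

lemma deriv_props:
  fixes a b \<tau> :: real and f :: "real \<Rightarrow> real"
  assumes ab: "a < b" and tau: "0 < \<tau>" and df: "diff_plus_1tau {a..b} \<tau> f"
  shows "\<exists>D C m. (\<forall>x\<in>{a..b}. (f has_real_derivative D x) (at x within {a..b})) \<and>
     (\<forall>x\<in>{a..b}. \<forall>y\<in>{a..b}. \<bar>D x - D y\<bar> \<le> C * \<bar>x - y\<bar> powr \<tau>) \<and> 0 \<le> C \<and> 0 < m \<and>
     (\<forall>x\<in>{a..b}. m \<le> D x)"
proof -
  let ?I = "{a..b}"
  from df have hp: "homeo_plus ?I f" and c1: "C1_on ?I (inv_into ?I f)" unfolding diff_plus_1tau_def by auto
  from df obtain D C0 where der: "\<forall>x\<in>?I. (f has_real_derivative D x) (at x within ?I)"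
    and hol0: "\<forall>x\<in>?I. \<forall>y\<in>?I. \<bar>D x - D y\<bar> \<le> C0 * \<bar>x - y\<bar> powr \<tau>"
    unfolding diff_plus_1tau_def by auto
  define C where "C = \<bar>C0\<bar>"
  have hol: "\<forall>x\<in>?I. \<forall>y\<in>?I. \<bar>D x - D y\<bar> \<le> C * \<bar>x - y\<bar> powr \<tau>"
  proof (intro ballI)
    fix x y assume "x \<in> ?I" "y \<in> ?I"
    then have "\<bar>D x - D y\<bar> \<le> C0 * \<bar>x - y\<bar> powr \<tau>" using hol0 by auto
    also have "\<dots> \<le> C * \<bar>x - y\<bar> powr \<tau>" unfolding C_def by (intro mult_right_mono) auto
    finally show "\<bar>D x - D y\<bar> \<le> C * \<bar>x - y\<bar> powr \<tau>" .
  qed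
  have cont: "continuous_on ?I D" by (rule holder_cont[OF hol tau])
  from hp have bij: "bij_betw f ?I ?I" and sm: "strict_mono_on ?I f" unfolding homeo_plus_def by auto
  have fI: "f ` ?I = ?I" using bij by (simp add: bij_betw_def)
  have injf: "inj_on f ?I" using bij by (simp add: bij_betw_def)
  from c1 obtain g' where g': "\<forall>x\<in>?I. (inv_into ?I f has_real_derivative g' x) (at x within ?I)"
    and "continuous_on ?I g'" unfolding C1_on_def by auto
  have nz: "D x \<noteq> 0" if x: "x \<in> ?I" for x
  proof
    assume D0: "D x = 0"
    have fx: "f x \<in> ?I" using fI x by auto
    have "(inv_into ?I f has_real_derivative g' (f x)) (at (f x) within f ` ?I)"
      using g' fx fI by auto
    from DERIV_image_chain[OF this der[rule_format, OF x]]
    have "(inv_into ?I f \<circ> f has_real_derivative g' (f x) * D x) (at x within ?I)" .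
    then have "((\<lambda>y. y) has_real_derivative g' (f x) * D x) (at x within ?I)"
      by (rule has_field_derivative_transform_within[where d=1]) (use x injf in auto)
    moreover have "((\<lambda>y. y) has_real_derivative 1) (at x within ?I)" by (rule DERIV_ident)
    ultimately have "g' (f x) * D x = 1"
      using has_field_derivative_unique not_bot_Icc[OF ab x] by blast
    with D0 show False by simp
  qed
  have pos: "D x > 0" if x: "x \<in> ?I" for x
  proof (rule ccontr)
    assume "\<not> D x > 0"
    with nz[OF x] have neg: "D x < 0" by auto
    obtain \<xi> where \<xi>: "a < \<xi>" "\<xi> < b" "f b - f a = D \<xi> * (b - a)"
      using mvt_within[of a a b b f D] ab der by auto
    have "f a < f b" using sm ab by (auto simp: strict_mono_on_def)
    with \<xi> ab have pxi: "D \<xi> > 0" by (smt (verit) mult_nonpos_nonneg)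
    show False
    proof (cases "x \<le> \<xi>")
      case True
      have "continuous_on {x..\<xi>} D" by (rule continuous_on_subset[OF cont]) (use x \<xi> in auto)
      then obtain z where "x \<le> z" "z \<le> \<xi>" "D z = 0" using IVT'[of D x 0 \<xi>] neg pxi True by auto
      then show False using nz[of z] x \<xi> by auto
    next
      case False
      have "continuous_on {\<xi>..x} D" by (rule continuous_on_subset[OF cont]) (use x \<xi> in auto)
      then obtain z where "\<xi> \<le> z" "z \<le> x" "D z = 0" using IVT2'[of D x 0 \<xi>] neg pxi False by auto
      then show False using nz[of z] x \<xi> by auto
    qed
  qed
  obtain x0 where x0: "x0 \<in> ?I" "\<forall>y\<in>?I. D x0 \<le> D y"
    using continuous_attains_inf[of ?I D] cont ab by auto
  show ?thesis
    apply (rule exI[of _ D], rule exI[of _ C], rule exI[of _ "D x0"])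
    using der hol pos[OF x0(1)] x0(2) by (auto simp: C_def)
qed


lemma homeo_facts:
  assumes "homeo_plus I f"
  shows "f ` I = I" "strict_mono_on I f" "continuous_on I f" "inj_on f I"
  using assms unfolding homeo_plus_def bij_betw_def by auto

lemma word_facts:
  assumes sS: "\<forall>n\<ge>1. s n \<in> S" and hS: "\<forall>f\<in>S. homeo_plus I f"
  shows "\<forall>y\<in>I. word s n y \<in> I" "strict_mono_on I (word s n)" "continuous_on I (word s n)"
proof -
  have "(\<forall>y\<in>I. word s n y \<in> I) \<and> strict_mono_on I (word s n) \<and> continuous_on I (word s n)"
  proof (induction n)
    case 0
    then show ?case by (auto simp: strict_mono_on_def continuous_on_id)
  next
    case (Suc n)
    have h: "homeo_plus I (s (Suc n))" using sS hS by auto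
    note hf = homeo_facts[OF h]
    have m: "\<forall>y\<in>I. word s (Suc n) y \<in> I" using Suc.IH hf(1) by auto
    have sm: "strict_mono_on I (word s (Suc n))"
      using Suc.IH hf(2) unfolding strict_mono_on_def by auto
    have "continuous_on I (s (Suc n) \<circ> word s n)"
      by (rule continuous_on_compose) (use Suc.IH hf(3) in \<open>auto intro: continuous_on_subset\<close>)
    then show ?case using m sm by (simp add: comp_def)
  qed
  then show "\<forall>y\<in>I. word s n y \<in> I" "strict_mono_on I (word s n)" "continuous_on I (word s n)"
    by auto
qed

lemma word_comm:
  assumes sS: "\<forall>n\<ge>1. s n \<in> S" and hS: "\<forall>f\<in>S. homeo_plus I f"
    and cI: "\<forall>y\<in>I. c y \<in> I" and comm: "\<forall>f\<in>S. \<forall>x\<in>I. c (f x) = f (c x)"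
    and y: "y \<in> I"
  shows "c (word s n y) = word s n (c y)"
proof (induction n)
  case 0 then show ?case by simp
next
  case (Suc n)
  have "word s n y \<in> I" using word_facts(1)[OF sS hS] y by auto
  then show ?case using Suc comm sS by simp
qed

lemma word_comm_pow:
  assumes sS: "\<forall>n\<ge>1. s n \<in> S" and hS: "\<forall>f\<in>S. homeo_plus I f"
    and cI: "\<forall>y\<in>I. c y \<in> I" and comm: "\<forall>f\<in>S. \<forall>x\<in>I. c (f x) = f (c x)"
    and y: "y \<in> I"
  shows "(c ^^ m) (word s n y) = word s n ((c ^^ m) y)" "(c ^^ m) y \<in> I"
proof -
  have "(c ^^ m) (word s n y) = word s n ((c ^^ m) y) \<and> (c ^^ m) y \<in> I"
  proof (induction m)
    case 0 then show ?case using y by simp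
  next
    case (Suc m)
    then show ?case using word_comm[OF sS hS cI comm, of "(c ^^ m) y" n] cI by simp
  qed
  then show "(c ^^ m) (word s n y) = word s n ((c ^^ m) y)" "(c ^^ m) y \<in> I" by auto
qed

lemma pow_facts:
  assumes "homeo_plus I c"
  shows "\<forall>y\<in>I. (c ^^ m) y \<in> I" "strict_mono_on I (c ^^ m)"
proof -
  note hf = homeo_facts[OF assms]
  have "(\<forall>y\<in>I. (c ^^ m) y \<in> I) \<and> strict_mono_on I (c ^^ m)"
  proof (induction m)
    case 0 then show ?case by (auto simp: strict_mono_on_def)
  next
    case (Suc m)
    then show ?case using hf(1,2) unfolding strict_mono_on_def by auto
  qed
  then show "\<forall>y\<in>I. (c ^^ m) y \<in> I" "strict_mono_on I (c ^^ m)" by auto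
qed

lemma word_deriv:
  assumes sS: "\<forall>n\<ge>1. s n \<in> S" and hS: "\<forall>f\<in>S. homeo_plus I f"
    and dS: "\<forall>f\<in>S. \<forall>x\<in>I. (f has_real_derivative D f x) (at x within I)"
    and y: "y \<in> I"
  shows "(word s n has_real_derivative (\<Prod>k<n. D (s (Suc k)) (word s k y))) (at y within I)"
proof (induction n)
  case 0 then show ?case by (simp add: id_def)
next
  case (Suc n)
  have wy: "word s n y \<in> I" using word_facts(1)[OF sS hS] y by auto
  have sub: "word s n ` I \<subseteq> I" using word_facts(1)[OF sS hS] by auto
  have "(s (Suc n) has_real_derivative D (s (Suc n)) (word s n y)) (at (word s n y) within I)"
    using dS sS wy by auto
  then have "(s (Suc n) has_real_derivative D (s (Suc n)) (word s n y)) (at (word s n y) within word s n ` I)"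
    by (rule DERIV_subset[OF _ sub])
  from DERIV_image_chain[OF this Suc.IH]
  show ?case by (simp add: mult.commute comp_def)
qed


lemma len_bound:
  fixes f :: "real \<Rightarrow> real"
  assumes cont: "continuous_on {a..b} f" and fI: "\<forall>y\<in>{a..b}. f y \<in> {a..b}"
    and pq: "p < q" "a \<le> p" "q \<le> b" and y: "y \<in> {p..q}" and z: "z \<in> {p..q}"
  shows "\<bar>f y - f z\<bar> \<le> len (f ` {p<..<q})"
proof -
  let ?J = "{p<..<q}"
  have sub: "f ` ?J \<subseteq> {a..b}" using fI pq by auto
  have ne: "f ` ?J \<noteq> {}" using pq by auto
  have ba: "bdd_above (f ` ?J)" by (rule bdd_above_mono[OF bdd_above_Icc sub])
  have bb: "bdd_below (f ` ?J)" by (rule bdd_below_mono[OF bdd_below_Icc sub])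
  let ?T = "{Inf (f ` ?J)..Sup (f ` ?J)}"
  have "f ` ?J \<subseteq> ?T"
  proof
    fix w assume "w \<in> f ` ?J"
    then show "w \<in> ?T" using cSup_upper[OF _ ba] cInf_lower[OF _ bb] by auto
  qed
  moreover have "continuous_on (closure ?J) f"
    using pq by (auto intro: continuous_on_subset[OF cont])
  ultimately have "f ` closure ?J \<subseteq> ?T" using image_closure_subset[of ?J f ?T] by auto
  then have "f y \<in> ?T" "f z \<in> ?T" using y z pq unfolding image_subset_iff by auto
  then show ?thesis unfolding len_def by auto
qed

lemma fix_end:
  fixes c :: "real \<Rightarrow> real"
  assumes h: "homeo_plus {a..b} c" and pq: "p < q" "a \<le> p" "q \<le> b"
    and cJ: "c ` {p<..<q} = {p<..<q}"
  shows "c p = p" "c q = q"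
proof -
  note hf = homeo_facts[OF h]
  let ?J = "{p<..<q}"
  have "continuous_on (closure ?J) c"
    using pq by (auto intro: continuous_on_subset[OF hf(3)])
  moreover have "c ` ?J \<subseteq> {p..q}" using cJ by auto
  ultimately have "c ` closure ?J \<subseteq> {p..q}" using image_closure_subset[of ?J c "{p..q}"] by auto
  then have cp: "c p \<in> {p..q}" and cq: "c q \<in> {p..q}" using pq unfolding image_subset_iff by auto
  show "c p = p"
  proof (rule ccontr)
    assume "c p \<noteq> p"
    with cp have gt: "c p > p" by auto
    define z where "z = (p + min (c p) q) / 2"
    have zJ: "z \<in> ?J" using gt pq unfolding z_def by auto
    then obtain y where y: "y \<in> ?J" "c y = z" using cJ by (metis imageE)
    have "c p < c y" using hf(2) y pq unfolding strict_mono_on_def by auto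
    moreover have "z < c p" using gt pq unfolding z_def by auto
    ultimately show False using y by auto
  qed
  show "c q = q"
  proof (rule ccontr)
    assume "c q \<noteq> q"
    with cq have lt: "c q < q" by auto
    define z where "z = (q + max (c q) p) / 2"
    have zJ: "z \<in> ?J" using lt pq unfolding z_def by auto
    then obtain y where y: "y \<in> ?J" "c y = z" using cJ by (metis imageE)
    have "c y < c q" using hf(2) y pq unfolding strict_mono_on_def by auto
    moreover have "c q < z" using lt pq unfolding z_def by auto
    ultimately show False using y by auto
  qed
qed


lemma distortion:
  fixes a b p q H m \<tau> :: real
  assumes sS: "\<forall>n\<ge>1. s n \<in> S" and hS: "\<forall>f\<in>S. homeo_plus {a..b} f"
    and hol: "\<forall>f\<in>S. \<forall>x\<in>{a..b}. \<forall>y\<in>{a..b}. \<bar>D f x - D f y\<bar> \<le> H * \<bar>x - y\<bar> powr \<tau>"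
    and H: "0 \<le> H" and tau: "0 < \<tau>"
    and low: "\<forall>f\<in>S. \<forall>x\<in>{a..b}. m \<le> D f x" and m: "0 < m"
    and pq: "p < q" "a \<le> p" "q \<le> b"
    and summ: "summable (\<lambda>n. len (word s n ` {p<..<q}) powr \<tau>)"
  shows "\<exists>K>0. \<forall>n. \<forall>y\<in>{p..q}. \<forall>z\<in>{p..q}.
     (\<Prod>k<n. D (s (Suc k)) (word s k y)) \<le> K * (\<Prod>k<n. D (s (Suc k)) (word s k z))"
proof -
  define ell where "ell k = len (word s k ` {p<..<q}) powr \<tau>" for k
  define K where "K = exp (H / m * suminf ell)"
  have summ': "summable ell" using summ unfolding ell_def by simp
  have l0: "0 \<le> ell k" for k unfolding ell_def by simp
  have step: "D (s (Suc k)) (word s k y) \<le> exp (H / m * ell k) * D (s (Suc k)) (word s k z)"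
    if y: "y \<in> {p..q}" and z: "z \<in> {p..q}" for y z k
  proof -
    let ?f = "s (Suc k)"
    have fS: "?f \<in> S" using sS by auto
    have wf: "\<forall>y\<in>{a..b}. word s k y \<in> {a..b}" "continuous_on {a..b} (word s k)"
      using word_facts[OF sS hS] by auto
    have yI: "y \<in> {a..b}" and zI: "z \<in> {a..b}" using y z pq by auto
    have u: "word s k y \<in> {a..b}" and v: "word s k z \<in> {a..b}" using wf yI zI by auto
    have d: "\<bar>word s k y - word s k z\<bar> \<le> len (word s k ` {p<..<q})"
      by (rule len_bound[OF wf(2) wf(1) pq y z])
    have "\<bar>word s k y - word s k z\<bar> powr \<tau> \<le> ell k"
      unfolding ell_def by (rule powr_mono2) (use d tau in auto)
    then have B: "H * \<bar>word s k y - word s k z\<bar> powr \<tau> \<le> H * ell k"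
      by (rule mult_left_mono[OF _ H])
    have A: "\<bar>D ?f (word s k y) - D ?f (word s k z)\<bar> \<le> H * \<bar>word s k y - word s k z\<bar> powr \<tau>"
      using hol fS u v by blast
    from A B have "D ?f (word s k y) \<le> D ?f (word s k z) + H * ell k" by linarith
    also have "H * ell k \<le> D ?f (word s k z) * (H / m * ell k)"
    proof -
      have "m \<le> D ?f (word s k z)" using low fS v by auto
      then have "m * (H / m * ell k) \<le> D ?f (word s k z) * (H / m * ell k)"
        by (intro mult_right_mono) (use H m l0 in auto)
      then show ?thesis using m by simp
    qed
    also have "D ?f (word s k z) + D ?f (word s k z) * (H / m * ell k)
        = D ?f (word s k z) * (1 + H / m * ell k)" by (simp add: algebra_simps)
    also have "\<dots> \<le> D ?f (word s k z) * exp (H / m * ell k)"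
    proof (rule mult_left_mono)
      show "1 + H / m * ell k \<le> exp (H / m * ell k)" by (rule exp_ge_add_one_self)
      have "m \<le> D ?f (word s k z)" using low fS v by blast
      then show "0 \<le> D ?f (word s k z)" using m by linarith
    qed
    finally show ?thesis by (simp add: mult.commute)
  qed
  have "\<forall>n. \<forall>y\<in>{p..q}. \<forall>z\<in>{p..q}.
     (\<Prod>k<n. D (s (Suc k)) (word s k y)) \<le> K * (\<Prod>k<n. D (s (Suc k)) (word s k z))"
  proof (intro allI ballI)
    fix n y z assume y: "y \<in> {p..q}" and z: "z \<in> {p..q}"
    have pos: "0 \<le> D (s (Suc k)) (word s k w)" if "w \<in> {p..q}" for k w
    proof -
      have "word s k w \<in> {a..b}" using word_facts(1)[OF sS hS] that pq by auto
      moreover have "s (Suc k) \<in> S" using sS by simp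
      ultimately have "m \<le> D (s (Suc k)) (word s k w)" using low by blast
      then show ?thesis using m by linarith
    qed
    have "(\<Prod>k<n. D (s (Suc k)) (word s k y)) \<le> (\<Prod>k<n. exp (H / m * ell k) * D (s (Suc k)) (word s k z))"
    proof (rule prod_mono)
      fix k assume "k \<in> {..<n}"
      show "0 \<le> D (s (Suc k)) (word s k y) \<and> D (s (Suc k)) (word s k y) \<le> exp (H / m * ell k) * D (s (Suc k)) (word s k z)"
        using step[OF y z, of k] pos[OF y, of k] by blast
    qed
    also have "\<dots> = exp (\<Sum>k<n. H / m * ell k) * (\<Prod>k<n. D (s (Suc k)) (word s k z))"
      by (simp add: prod.distrib exp_sum)
    also have "exp (\<Sum>k<n. H / m * ell k) \<le> K"
    proof -
      have "(\<Sum>k<n. ell k) \<le> suminf ell" by (rule sum_le_suminf[OF summ']) (auto simp: l0)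
      have "(\<Sum>k<n. H / m * ell k) = H / m * (\<Sum>k<n. ell k)" by (rule sum_distrib_left[symmetric])
      also have "\<dots> \<le> H / m * suminf ell" by (rule mult_left_mono) (use H m \<open>(\<Sum>k<n. ell k) \<le> suminf ell\<close> in auto)
      finally have "(\<Sum>k<n. H / m * ell k) \<le> H / m * suminf ell" .
      then show ?thesis unfolding K_def by simp
    qed
    then have "exp (\<Sum>k<n. H / m * ell k) * (\<Prod>k<n. D (s (Suc k)) (word s k z))
        \<le> K * (\<Prod>k<n. D (s (Suc k)) (word s k z))"
    proof (rule mult_right_mono)
      show "0 \<le> (\<Prod>k<n. D (s (Suc k)) (word s k z))"
        by (rule prod_nonneg) (use pos[OF z] in blast)
    qed
    finally show "(\<Prod>k<n. D (s (Suc k)) (word s k y)) \<le> K * (\<Prod>k<n. D (s (Suc k)) (word s k z))" .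
  qed
  moreover have "K > 0" unfolding K_def by simp
  ultimately show ?thesis by blast
qed


lemma c_near_iso:
  fixes a b p q Hc \<tau> :: real and c Dc :: "real \<Rightarrow> real"
  assumes sS: "\<forall>n\<ge>1. s n \<in> S" and hS: "\<forall>f\<in>S. homeo_plus {a..b} f"
    and hc: "homeo_plus {a..b} c" and comm: "\<forall>f\<in>S. \<forall>x\<in>{a..b}. c (f x) = f (c x)"
    and dc: "\<forall>x\<in>{a..b}. (c has_real_derivative Dc x) (at x within {a..b})"
    and holc: "\<forall>x\<in>{a..b}. \<forall>y\<in>{a..b}. \<bar>Dc x - Dc y\<bar> \<le> Hc * \<bar>x - y\<bar> powr \<tau>"
    and Hc: "0 \<le> Hc" and tau: "0 < \<tau>"
    and pq: "p < q" "a \<le> p" "q \<le> b" and cJ: "c ` {p<..<q} = {p<..<q}"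
    and summ: "summable (\<lambda>n. len (word s n ` {p<..<q}) powr \<tau>)"
  shows "\<exists>n. \<forall>u v. p \<le> u \<longrightarrow> u < v \<longrightarrow> v \<le> q \<longrightarrow>
     (word s n v - word s n u) / 2 \<le> (c ^^ m) (word s n v) - (c ^^ m) (word s n u)"
proof -
  let ?I = "{a..b}"
  note hf = homeo_facts[OF hc]
  have cI: "\<forall>y\<in>?I. c y \<in> ?I" using hf(1) by auto
  define eps where "eps n = Hc * len (word s n ` {p<..<q}) powr \<tau>" for n
  have "(\<lambda>n. len (word s n ` {p<..<q}) powr \<tau>) \<longlonglongrightarrow> 0" by (rule summable_LIMSEQ_zero[OF summ])
  then have e0: "eps \<longlonglongrightarrow> 0" unfolding eps_def by (rule tendsto_mult_right_zero)
  then have "(\<lambda>n. (1 - eps n) ^ m) \<longlonglongrightarrow> (1 - 0) ^ m" by (intro tendsto_intros)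
  then have "eventually (\<lambda>n. (1 - eps n) ^ m > 1/2) sequentially" by (rule order_tendstoD) simp
  moreover have "eventually (\<lambda>n. eps n < 1) sequentially" using e0 by (rule order_tendstoD) simp
  ultimately have "eventually (\<lambda>n. (1 - eps n) ^ m > 1/2 \<and> eps n < 1) sequentially"
    by (rule eventually_conj)
  then obtain n where n1: "(1 - eps n) ^ m > 1/2" and n2: "eps n < 1"
    unfolding eventually_sequentially by auto
  let ?w = "word s n"
  have wI: "\<forall>y\<in>?I. ?w y \<in> ?I" and wsm: "strict_mono_on ?I ?w" and wc: "continuous_on ?I ?w"
    using word_facts[OF sS hS] by auto
  have pI: "p \<in> ?I" and qI: "q \<in> ?I" using pq by auto
  define wp where "wp = ?w p"
  define wq where "wq = ?w q"
  have wpq: "wp < wq" unfolding wp_def wq_def using wsm pI qI pq by (auto simp: strict_mono_on_def)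
  have wpI: "a \<le> wp" and wqI: "wq \<le> b" using wI pI qI unfolding wp_def wq_def by auto
  have cp: "c p = p" and cq: "c q = q" using fix_end[OF hc pq cJ] by auto
  have cwp: "c wp = wp" unfolding wp_def using word_comm[OF sS hS cI comm pI, of n] cp by simp
  have cwq: "c wq = wq" unfolding wq_def using word_comm[OF sS hS cI comm qI, of n] cq by simp
  obtain \<xi> where \<xi>: "wp < \<xi>" "\<xi> < wq" "c wq - c wp = Dc \<xi> * (wq - wp)"
    using mvt_within[OF wpI wpq wqI dc] by auto
  have D1: "Dc \<xi> = 1" using \<xi> cwp cwq wpq by simp
  have dlen: "wq - wp \<le> len (word s n ` {p<..<q})"
    using len_bound[OF wc wI pq, of q p] pq unfolding wp_def wq_def by auto
  have Dlow: "Dc y \<ge> 1 - eps n" if y: "wp \<le> y" "y \<le> wq" for y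
  proof -
    have yI: "y \<in> ?I" and xiI: "\<xi> \<in> ?I" using y wpI wqI \<xi> by auto
    have "\<bar>y - \<xi>\<bar> \<le> len (word s n ` {p<..<q})" using y \<xi> dlen by auto
    then have "\<bar>y - \<xi>\<bar> powr \<tau> \<le> len (word s n ` {p<..<q}) powr \<tau>"
      by (rule powr_mono2[rotated 2]) (use tau in auto)
    then have "Hc * \<bar>y - \<xi>\<bar> powr \<tau> \<le> eps n" unfolding eps_def by (rule mult_left_mono[OF _ Hc])
    moreover have "\<bar>Dc y - Dc \<xi>\<bar> \<le> Hc * \<bar>y - \<xi>\<bar> powr \<tau>" using holc yI xiI by blast
    ultimately show ?thesis using D1 by linarith
  qed
  have cL: "wp \<le> c y \<and> c y \<le> wq" if "wp \<le> y" "y \<le> wq" for y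
  proof -
    have yI: "y \<in> ?I" using that wpI wqI by auto
    have "c wp \<le> c y" by (rule strict_mono_on_leD[OF hf(2)]) (use yI wpI wqI wpq that in auto)
    moreover have "c y \<le> c wq" by (rule strict_mono_on_leD[OF hf(2)]) (use yI wpI wqI wpq that in auto)
    ultimately show ?thesis using cwp cwq by simp
  qed
  have ind: "\<forall>u v. wp \<le> u \<longrightarrow> u < v \<longrightarrow> v \<le> wq \<longrightarrow>
     wp \<le> (c ^^ j) u \<and> (c ^^ j) u < (c ^^ j) v \<and> (c ^^ j) v \<le> wq \<and>
     (1 - eps n) ^ j * (v - u) \<le> (c ^^ j) v - (c ^^ j) u" for j
  proof (induction j)
    case 0 then show ?case by simp
  next
    case (Suc j)
    show ?case
    proof (intro allI impI)
      fix u v assume uv: "wp \<le> u" "u < v" "v \<le> wq"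
      define u' where "u' = (c ^^ j) u"
      define v' where "v' = (c ^^ j) v"
      have IH: "wp \<le> u'" "u' < v'" "v' \<le> wq" "(1 - eps n) ^ j * (v - u) \<le> v' - u'"
        using Suc.IH uv unfolding u'_def v'_def by blast+
      have c1: "wp \<le> c u'" "c v' \<le> wq" using cL IH by auto
      have c2: "c u' < c v'" using hf(2) IH wpI wqI unfolding strict_mono_on_def by auto
      obtain \<eta> where \<eta>: "u' < \<eta>" "\<eta> < v'" "c v' - c u' = Dc \<eta> * (v' - u')"
        using mvt_within[OF _ IH(2) _ dc] IH wpI wqI by auto
      have De: "1 - eps n \<le> Dc \<eta>" using Dlow \<eta> IH by auto
      have e1: "0 \<le> 1 - eps n" using n2 by simp
      have "(1 - eps n) ^ Suc j * (v - u) = (1 - eps n) * ((1 - eps n) ^ j * (v - u))" by simp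
      also have "\<dots> \<le> (1 - eps n) * (v' - u')" by (rule mult_left_mono[OF IH(4) e1])
      also have "\<dots> \<le> Dc \<eta> * (v' - u')" by (rule mult_right_mono[OF De]) (use IH in simp)
      finally have "(1 - eps n) ^ Suc j * (v - u) \<le> c v' - c u'" using \<eta> by simp
      then show "wp \<le> (c ^^ Suc j) u \<and> (c ^^ Suc j) u < (c ^^ Suc j) v \<and> (c ^^ Suc j) v \<le> wq \<and>
         (1 - eps n) ^ Suc j * (v - u) \<le> (c ^^ Suc j) v - (c ^^ Suc j) u"
        using c1 c2 unfolding u'_def v'_def by simp
    qed
  qed
  show ?thesis
  proof (intro exI[of _ n] allI impI)
    fix u v assume uv: "p \<le> u" "u < v" "v \<le> q"
    have uI: "u \<in> ?I" and vI: "v \<in> ?I" using uv pq by auto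
    have "wp \<le> ?w u" unfolding wp_def by (rule strict_mono_on_leD[OF wsm pI uI uv(1)])
    moreover have "?w v \<le> wq" unfolding wq_def by (rule strict_mono_on_leD[OF wsm vI qI uv(3)])
    moreover have "?w u < ?w v" using wsm uI vI uv(2) unfolding strict_mono_on_def by auto
    ultimately have r: "(1 - eps n) ^ m * (?w v - ?w u) \<le> (c ^^ m) (?w v) - (c ^^ m) (?w u)"
      using ind[of m] by blast
    have "(?w v - ?w u) / 2 \<le> (1 - eps n) ^ m * (?w v - ?w u)"
      using n1 \<open>?w u < ?w v\<close> by (simp add: mult_right_mono)
    then show "(?w v - ?w u) / 2 \<le> (c ^^ m) (?w v) - (c ^^ m) (?w u)" using r by linarith
  qed
qed


lemma orbit_unbounded:
  fixes g :: "nat \<Rightarrow> real"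
  assumes d: "0 < \<delta>" and st: "\<forall>m. \<delta> \<le> g (Suc m) - g m" and bd: "\<forall>m. g m \<in> {a..b}"
  shows False
proof -
  have lin: "g 0 + real m * \<delta> \<le> g m" for m
  proof (induction m)
    case 0 then show ?case by simp
  next
    case (Suc m) then show ?case using st[rule_format, of m] by (simp add: algebra_simps)
  qed
  obtain m where "b - a < real m * \<delta>" using ex_less_of_nat_mult[OF d] by auto
  moreover have "g 0 \<ge> a" "g m \<le> b" using bd[rule_format, of 0] bd[rule_format, of m] by auto
  ultimately show False using lin[of m] by linarith
qed

theorem lemma3p7:
  fixes a b \<tau> :: real and J :: "real set" and S :: "(real \<Rightarrow> real) set"
    and s :: "nat \<Rightarrow> real \<Rightarrow> real" and c :: "real \<Rightarrow> real"
  assumes "a < b"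
    and "open_interval J" and "J \<subseteq> {a..b}"
    and "finite S" and "\<forall>f\<in>S. homeo_plus {a..b} f"
    and "0 < \<tau>" and "\<tau> < 1"
    and "\<forall>n\<ge>1. s n \<in> S"
    and "summable (\<lambda>n. len (word s n ` J) powr \<tau>)"
    and "homeo_plus {a..b} c"
    and "\<forall>f\<in>S. \<forall>x\<in>{a..b}. c (f x) = f (c x)"
    and "c ` J = J" and "\<exists>x\<in>J. c x \<noteq> x"
  shows "nesting {a..b} 2 \<tau> (insert c S) \<and>
         \<not> (\<forall>f\<in>insert c S. diff_plus_1tau {a..b} \<tau> f)"
proof -
  note ab = assms(1) and JI = assms(3) and finS = assms(4) and hS = assms(5) and tau = assms(6)
    and tau1 = assms(7) and sS = assms(8) and summ = assms(9) and hc = assms(10) and comm = assms(11)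
    and cJ = assms(12)
  let ?I = "{a..b}"
  from assms(2) obtain p q where pq0: "p < q" and Jpq: "J = {p<..<q}" unfolding open_interval_def by auto
  have "closure J \<subseteq> closure ?I" by (rule closure_mono[OF JI])
  then have "{p..q} \<subseteq> ?I" using pq0 Jpq by simp
  then have pq: "p < q" "a \<le> p" "q \<le> b" using pq0 by auto
  from assms(13) obtain x where xJ: "x \<in> J" and cx: "c x \<noteq> x" by auto
  note hf = homeo_facts[OF hc]
  have cI: "\<forall>y\<in>?I. c y \<in> ?I" using hf(1) by auto
  have cxJ: "c x \<in> J" using xJ cJ by auto
  have winj: "inj_on (word s n) ?I" for n
    using word_facts(2)[OF sS hS] strict_mono_on_imp_inj_on by blast
  have wI: "\<forall>y\<in>?I. word s n y \<in> ?I" for n using word_facts(1)[OF sS hS] by blast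
  define J2 where "J2 = {min x (c x)<..<max x (c x)}"
  have oJ2: "open_interval J2" unfolding J2_def open_interval_def using cx
    by (intro exI[of _ "min x (c x)"] exI[of _ "max x (c x)"]) auto
  have J2J: "J2 \<subset> J"
  proof -
    have "J2 \<subseteq> J" unfolding J2_def Jpq using xJ cxJ Jpq by auto
    moreover have "x \<notin> J2" unfolding J2_def by auto
    ultimately show ?thesis using xJ by auto
  qed
  have disj: "c y \<notin> J2" if y: "y \<in> J2" for y
  proof -
    have yI: "y \<in> ?I" and xI: "x \<in> ?I" using y J2J xJ JI by auto
    show ?thesis
    proof (cases "x < c x")
      case True
      then have "x < y" using y unfolding J2_def by auto
      then have "c x < c y" using hf(2) xI yI unfolding strict_mono_on_def by auto
      then show ?thesis using True unfolding J2_def by auto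
    next
      case False
      then have "y < x" using y cx unfolding J2_def by auto
      then have "c y < c x" using hf(2) xI yI unfolding strict_mono_on_def by auto
      then show ?thesis using False unfolding J2_def by auto
    qed
  qed
  have cond: "c ` (word s n ` J2) \<inter> word s n ` J2 = {} \<and> c ` (word s n ` J) = word s n ` J" for n
  proof
    show "c ` (word s n ` J2) \<inter> word s n ` J2 = {}"
    proof (rule ccontr)
      assume "c ` (word s n ` J2) \<inter> word s n ` J2 \<noteq> {}"
      then obtain y z where y: "y \<in> J2" and z: "z \<in> J2" and e: "c (word s n y) = word s n z" by auto
      have yI: "y \<in> ?I" and zI: "z \<in> ?I" using y z J2J JI by auto
      have "word s n (c y) = word s n z" using e word_comm[OF sS hS cI comm yI] by simp
      then have "c y = z" using winj[of n] cI yI zI unfolding inj_on_def by blast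
      then show False using disj[OF y] z by simp
    qed
    have "c ` (word s n ` J) = (\<lambda>y. c (word s n y)) ` J" by (simp add: image_image)
    also have "\<dots> = (\<lambda>y. word s n (c y)) ` J"
      by (rule image_cong[OF refl]) (use word_comm[OF sS hS cI comm] JI in auto)
    also have "\<dots> = word s n ` (c ` J)" by (simp add: image_image)
    finally show "c ` (word s n ` J) = word s n ` J" using cJ by simp
  qed
  have nest: "nesting ?I 2 \<tau> (insert c S)"
    unfolding nesting_def
  proof (intro conjI)
    show "finite (insert c S)" using finS by simp
    show "\<forall>f\<in>insert c S. homeo_plus ?I f" using hS hc by simp
    show "(2::nat) \<le> 2" "0 < \<tau>" "\<tau> \<le> 1" using tau tau1 by auto
    let ?JJ = "\<lambda>i::nat. if i = 1 then J else J2"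
    have i12: "i = 1 \<or> i = 2" if "i \<in> {1..2::nat}" for i using that by auto
    show "\<exists>JJ :: nat \<Rightarrow> real set. (\<forall>i\<in>{1..2}. open_interval (JJ i) \<and> JJ i \<subseteq> ?I) \<and> (\<forall>i\<in>{2..2}. JJ i \<subset> JJ (i - 1)) \<and>
      (\<exists>s. (\<forall>n\<ge>1. s n \<in> insert c S) \<and> summable (\<lambda>n. len (word s n ` JJ 1) powr \<tau>) \<and>
        (\<forall>i\<in>{2..2}. \<forall>n. \<exists>t\<in>insert c S. t ` (word s n ` JJ i) \<inter> word s n ` JJ i = {} \<and>
           t ` (word s n ` JJ (i - 1)) = word s n ` JJ (i - 1)))"
    proof (intro exI[of _ ?JJ] conjI)
      show "\<forall>i\<in>{1..2}. open_interval (?JJ i) \<and> ?JJ i \<subseteq> ?I"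
        using i12 assms(2) JI oJ2 J2J by auto
      show "\<forall>i\<in>{2..2}. ?JJ i \<subset> ?JJ (i - 1)" using J2J by auto
      show "\<exists>s'. (\<forall>n\<ge>1. s' n \<in> insert c S) \<and> summable (\<lambda>n. len (word s' n ` ?JJ 1) powr \<tau>) \<and>
        (\<forall>i\<in>{2..2}. \<forall>n. \<exists>t\<in>insert c S. t ` (word s' n ` ?JJ i) \<inter> word s' n ` ?JJ i = {} \<and>
           t ` (word s' n ` ?JJ (i - 1)) = word s' n ` ?JJ (i - 1))"
        using sS summ cond by (intro exI[of _ s]) auto
    qed
  qed
  have notall: "\<not> (\<forall>f\<in>insert c S. diff_plus_1tau ?I \<tau> f)"
  proof
    assume all: "\<forall>f\<in>insert c S. diff_plus_1tau ?I \<tau> f"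
    have "\<forall>f\<in>insert c S. \<exists>D C m. (\<forall>x\<in>?I. (f has_real_derivative D x) (at x within ?I)) \<and>
     (\<forall>x\<in>?I. \<forall>y\<in>?I. \<bar>D x - D y\<bar> \<le> C * \<bar>x - y\<bar> powr \<tau>) \<and> 0 \<le> C \<and> 0 < m \<and>
     (\<forall>x\<in>?I. m \<le> D x)"
      using deriv_props[OF ab tau] all by blast
    from bchoice[OF this] obtain DD where "\<forall>f\<in>insert c S. \<exists>C m. (\<forall>x\<in>?I. (f has_real_derivative DD f x) (at x within ?I)) \<and>
     (\<forall>x\<in>?I. \<forall>y\<in>?I. \<bar>DD f x - DD f y\<bar> \<le> C * \<bar>x - y\<bar> powr \<tau>) \<and> 0 \<le> C \<and> 0 < m \<and>
     (\<forall>x\<in>?I. m \<le> DD f x)" ..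
    from bchoice[OF this] obtain CC where "\<forall>f\<in>insert c S. \<exists>m. (\<forall>x\<in>?I. (f has_real_derivative DD f x) (at x within ?I)) \<and>
     (\<forall>x\<in>?I. \<forall>y\<in>?I. \<bar>DD f x - DD f y\<bar> \<le> CC f * \<bar>x - y\<bar> powr \<tau>) \<and> 0 \<le> CC f \<and> 0 < m \<and>
     (\<forall>x\<in>?I. m \<le> DD f x)" ..
    from bchoice[OF this] obtain mm where P: "\<forall>f\<in>insert c S. (\<forall>x\<in>?I. (f has_real_derivative DD f x) (at x within ?I)) \<and>
     (\<forall>x\<in>?I. \<forall>y\<in>?I. \<bar>DD f x - DD f y\<bar> \<le> CC f * \<bar>x - y\<bar> powr \<tau>) \<and> 0 \<le> CC f \<and> 0 < mm f \<and>
     (\<forall>x\<in>?I. mm f \<le> DD f x)" ..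
    have Sne: "S \<noteq> {}" using sS by auto
    define H where "H = (\<Sum>f\<in>S. CC f)"
    define m0 where "m0 = Min (mm ` S)"
    have H0: "0 \<le> H" unfolding H_def using P by (auto intro: sum_nonneg)
    have m0: "0 < m0" unfolding m0_def using P finS Sne by (auto simp: Min_gr_iff)
    have dS: "\<forall>f\<in>S. \<forall>x\<in>?I. (f has_real_derivative DD f x) (at x within ?I)" using P by blast
    have holS: "\<forall>f\<in>S. \<forall>x\<in>?I. \<forall>y\<in>?I. \<bar>DD f x - DD f y\<bar> \<le> H * \<bar>x - y\<bar> powr \<tau>"
    proof (intro ballI)
      fix f x y assume f: "f \<in> S" and x: "x \<in> ?I" and y: "y \<in> ?I"
      have "CC f \<le> H" unfolding H_def by (rule member_le_sum) (use P f finS in auto)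
      then have "CC f * \<bar>x - y\<bar> powr \<tau> \<le> H * \<bar>x - y\<bar> powr \<tau>" by (rule mult_right_mono) simp
      moreover have "\<bar>DD f x - DD f y\<bar> \<le> CC f * \<bar>x - y\<bar> powr \<tau>" using P f x y by blast
      ultimately show "\<bar>DD f x - DD f y\<bar> \<le> H * \<bar>x - y\<bar> powr \<tau>" by linarith
    qed
    have lowS: "\<forall>f\<in>S. \<forall>x\<in>?I. m0 \<le> DD f x"
    proof (intro ballI)
      fix f x assume f: "f \<in> S" and x: "x \<in> ?I"
      have "m0 \<le> mm f" unfolding m0_def using finS f by simp
      moreover have "mm f \<le> DD f x" using P f x by blast
      ultimately show "m0 \<le> DD f x" by linarith
    qed
    have summ': "summable (\<lambda>n. len (word s n ` {p<..<q}) powr \<tau>)" using summ Jpq by simp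
    obtain K where K0: "K > 0" and Kb: "\<forall>n. \<forall>y\<in>{p..q}. \<forall>z\<in>{p..q}.
     (\<Prod>k<n. DD (s (Suc k)) (word s k y)) \<le> K * (\<Prod>k<n. DD (s (Suc k)) (word s k z))"
      using distortion[OF sS hS holS H0 tau lowS m0 pq summ'] by blast
    define Dw where "Dw n y = (\<Prod>k<n. DD (s (Suc k)) (word s k y))" for n y
    have dw: "\<forall>y\<in>?I. (word s n has_real_derivative Dw n y) (at y within ?I)" for n
      unfolding Dw_def using word_deriv[OF sS hS dS] by blast
    have Dwpos: "Dw n y > 0" if "y \<in> ?I" for n y
      unfolding Dw_def
    proof (rule prod_pos)
      fix k assume "k \<in> {..<n}"
      have "word s k y \<in> ?I" using wI that by blast
      moreover have "s (Suc k) \<in> S" using sS by simp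
      ultimately have "m0 \<le> DD (s (Suc k)) (word s k y)" using lowS by blast
      then show "0 < DD (s (Suc k)) (word s k y)" using m0 by linarith
    qed
    have cdat: "\<forall>x\<in>?I. (c has_real_derivative DD c x) (at x within ?I)"
      "\<forall>x\<in>?I. \<forall>y\<in>?I. \<bar>DD c x - DD c y\<bar> \<le> CC c * \<bar>x - y\<bar> powr \<tau>" "0 \<le> CC c"
      using P by auto
    have cJ': "c ` {p<..<q} = {p<..<q}" using cJ Jpq by simp
    have cmJ: "(c ^^ m) y \<in> J" if "y \<in> J" for m y
    proof (induction m)
      case 0 then show ?case using that by simp
    next
      case (Suc m) then show ?case using cJ by auto
    qed
    have key: "(v - u) / (2 * K) \<le> (c ^^ m) v - (c ^^ m) u" if uv: "u \<in> J" "v \<in> J" "u < v" for u v m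
    proof -
      obtain n where n: "\<forall>u v. p \<le> u \<longrightarrow> u < v \<longrightarrow> v \<le> q \<longrightarrow>
          (word s n v - word s n u) / 2 \<le> (c ^^ m) (word s n v) - (c ^^ m) (word s n u)"
        using c_near_iso[OF sS hS hc comm cdat tau pq cJ' summ', of m] by blast
      define u' where "u' = (c ^^ m) u"
      define v' where "v' = (c ^^ m) v"
      have uI: "u \<in> ?I" and vI: "v \<in> ?I" using uv JI by auto
      have u'J: "u' \<in> J" and v'J: "v' \<in> J" using cmJ uv unfolding u'_def v'_def by auto
      have uv': "u' < v'" using pow_facts(2)[OF hc, of m] uI vI uv unfolding u'_def v'_def strict_mono_on_def by auto
      have u'I: "a \<le> u'" and v'I: "v' \<le> b" using u'J v'J JI by auto
      have uI': "a \<le> u" and vI': "v \<le> b" using uI vI by auto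
      obtain \<xi> where \<xi>: "u < \<xi>" "\<xi> < v" "word s n v - word s n u = Dw n \<xi> * (v - u)"
        using mvt_within[OF uI' uv(3) vI' dw] by blast
      obtain \<eta> where \<eta>: "u' < \<eta>" "\<eta> < v'" "word s n v' - word s n u' = Dw n \<eta> * (v' - u')"
        using mvt_within[OF u'I uv' v'I dw] by blast
      have \<xi>pq: "\<xi> \<in> {p..q}" using \<xi> uv Jpq by auto
      have \<eta>pq: "\<eta> \<in> {p..q}" using \<eta> u'J v'J Jpq by auto
      have Kineq: "Dw n \<eta> \<le> K * Dw n \<xi>" using Kb \<xi>pq \<eta>pq unfolding Dw_def by blast
      have pos\<xi>: "Dw n \<xi> > 0" using Dwpos \<xi>pq pq by auto
      have "(word s n v - word s n u) / 2 \<le> (c ^^ m) (word s n v) - (c ^^ m) (word s n u)"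
        using n uv Jpq by auto
      also have "\<dots> = word s n v' - word s n u'"
        using word_comm_pow(1)[OF sS hS cI comm uI] word_comm_pow(1)[OF sS hS cI comm vI]
        unfolding u'_def v'_def by simp
      also have "\<dots> \<le> K * Dw n \<xi> * (v' - u')"
        using \<eta>(3) Kineq uv' by (simp add: mult_right_mono)
      finally have "Dw n \<xi> * (v - u) / 2 \<le> Dw n \<xi> * (K * (v' - u'))" using \<xi>(3) by (simp add: algebra_simps)
      then have "Dw n \<xi> * ((v - u) / 2) \<le> Dw n \<xi> * (K * (v' - u'))" by simp
      then have "(v - u) / 2 \<le> K * (v' - u')" by (rule mult_le_cancel_left_pos[OF pos\<xi>, THEN iffD1])
      then have "((v - u) / 2) / K \<le> v' - u'" using pos_divide_le_eq[OF K0] by (metis mult.commute)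
      then show ?thesis unfolding u'_def v'_def by simp
    qed
    have orb: "(c ^^ m) (c x) = (c ^^ Suc m) x" for m by (simp add: funpow_swap1)
    have cmI: "(c ^^ m) x \<in> ?I" for m using cmJ[OF xJ, of m] JI by blast
    have K2: "0 < 2 * K" using K0 by simp
    show False
    proof (cases "x < c x")
      case True
      define g where "g m = (c ^^ m) x" for m
      have st: "(c x - x) / (2 * K) \<le> g (Suc m) - g m" for m
      proof -
        have "(c x - x) / (2 * K) \<le> (c ^^ m) (c x) - (c ^^ m) x" by (rule key[OF xJ cxJ True])
        then show ?thesis using orb[of m] unfolding g_def by simp
      qed
      have bd: "g m \<in> ?I" for m unfolding g_def by (rule cmI)
      have d: "0 < (c x - x) / (2 * K)" using True K2 by simp
      show False using orbit_unbounded[OF d] st bd by blast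
    next
      case False
      then have lt: "c x < x" using cx by auto
      define g where "g m = - (c ^^ m) x" for m
      have st: "(x - c x) / (2 * K) \<le> g (Suc m) - g m" for m
      proof -
        have "(x - c x) / (2 * K) \<le> (c ^^ m) x - (c ^^ m) (c x)" by (rule key[OF cxJ xJ lt])
        then show ?thesis using orb[of m] unfolding g_def by simp
      qed
      have bd: "g m \<in> {-b..-a}" for m using cmI[of m] unfolding g_def by simp
      have d: "0 < (x - c x) / (2 * K)" using lt K2 by simp
      show False using orbit_unbounded[OF d] st bd by blast
    qed
  qed
  show ?thesis using nest notall by blast
qed

end
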